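(* Let $u,v\in\{m_1,\dots,m_{k+1}\}^*$. Then there exists a state $s\in\mathcal S_k$ with $u\ast s=v\ast s\neq\varnothing$ if and only if $u\sim v$.
   Context: Fix $k\ge 0$. A system of $k$ stacks in series consists of an input queue, stacks $1,\dots,k$, and an output queue. A state records the contents of each stack and each queue (finitely many distinct labelled elements); there is one additional "illegal" state $\varnothing$; $\mathcal S_k$ denotes the set of all states including $\varnothing$. The moves are $m_1,\dots,m_{k+1}$: $m_i$ ($1\le i\le k$) pushes an element onto stack $i$, taking it from the front of the input queue if $i=1$ and popping it from the top of stack $i-1$ if $i>1$; $m_{k+1}$ pops the top of stack $k$ and enqueues it at the back of the output queue. For a word $w$ and state $s$, $w\ast s$ is obtained by applying the moves of $w$ left to right, with $w\ast s=\varnothing$ if some move is illegal and $w\ast\varnothing=\varnothing$. For words $x,y$ define $x\sim y$ iff $x\ast s=y\ast s$ for all $s\in\mathcal S_k$. *)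

theory Defs
  imports Main
begin

text \<open>A (legal) state of k stacks in series: (input queue, stacks 1..k, output queue). The front of the input queue is
  its head, the top of a stack is its head, the back of the output queue is its last
  element. The illegal state is None.\<close>

type_synonym state = "(nat list \<times> nat list list \<times> nat list) option"

definition states :: "nat \<Rightarrow> state set" where
  "states k = {None} \<union>
     {Some (inp, sts, out) | inp sts out. length sts = k \<and> distinct (inp @ concat sts @ out)}"

text \<open>Move m_i (1 \<le> i \<le> k+1): container 0 is the input queue, containers 1..k are the
  stacks, container k+1 is the output queue; m_i moves one element from container i-1
  to container i.\<close>
definition move :: "nat \<Rightarrow> nat \<Rightarrow> state \<Rightarrow> state" where
  "move k i s = (case s of None \<Rightarrow> None
     | Some (inp, sts, out) \<Rightarrow>
        (if i < 1 \<or> k + 1 < i then None else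
         (let src = (if i = 1 then inp else sts ! (i - 2)) in
          (if src = [] then None else
           (let x = hd src;
                inp2 = (if i = 1 then tl src else inp);
                sts2 = (if i = 1 then sts else sts[i - 2 := tl src])
            in (if i \<le> k then Some (inp2, sts2[i - 1 := x # (sts2 ! (i - 1))], out)
                else Some (inp2, sts2, out @ [x])))))))"

definition act :: "nat \<Rightarrow> nat list \<Rightarrow> state \<Rightarrow> state" where
  "act k w s = fold (move k) w s"

definition words :: "nat \<Rightarrow> nat list set" where
  "words k = {w. set w \<subseteq> {1..k+1}}"

definition equiv_words :: "nat \<Rightarrow> nat list \<Rightarrow> nat list \<Rightarrow> bool" where
  "equiv_words k x y \<longleftrightarrow> (\<forall>s \<in> states k. act k x s = act k y s)"

end

theory Submission
  imports Defs "HOL-Library.Multiset"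
begin

fun conts :: "nat list \<times> nat list list \<times> nat list \<Rightarrow> nat list list" where
  "conts (inp, ss, oq) = inp # ss @ [oq]"

lemma move_None[simp]: "move k i None = None" by (simp add: move_def)
lemma act_None[simp]: "act k w None = None" by (induct w) (auto simp: act_def)
lemma act_Cons[simp]: "act k (i # w) s = act k w (move k i s)" by (simp add: act_def)
lemma act_Nil[simp]: "act k [] s = s" by (simp add: act_def)

lemma move_out: "i < 1 \<or> k + 1 < i \<Longrightarrow> move k i s = None"
  by (cases s) (auto simp: move_def)

lemma i_cases: "1 \<le> (i::nat) \<Longrightarrow> i = 1 \<or> (\<exists>j. i = Suc (Suc j))"
  by presburger

lemma move_None_iff:
  assumes "length ss = k" "1 \<le> i" "i \<le> k + 1"
  shows "move k i (Some (inp, ss, oq)) = None \<longleftrightarrow> conts (inp, ss, oq) ! (i - 1) = []"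
  using i_cases[OF assms(2)] assms by (auto simp: move_def Let_def nth_append split: if_splits)

lemma move_Some:
  assumes "length ss = k" "move k i (Some (inp, ss, oq)) = Some (inp', ss', oq')"
  shows "1 \<le> i \<and> i \<le> k + 1 \<and> conts (inp, ss, oq) ! (i - 1) \<noteq> [] \<and> length ss' = k \<and>
    conts (inp', ss', oq') = (conts (inp, ss, oq))[i - 1 := tl (conts (inp, ss, oq) ! (i - 1)),
       i := (if i \<le> k then hd (conts (inp, ss, oq) ! (i - 1)) # conts (inp, ss, oq) ! i
             else conts (inp, ss, oq) ! i @ [hd (conts (inp, ss, oq) ! (i - 1))])]"
proof -
  have r: "1 \<le> i \<and> i \<le> k + 1" using assms by (auto simp: move_def split: if_splits)
  show ?thesis
  proof (cases "i = 1")
    case True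
    then show ?thesis using assms
      apply (cases k)
       apply (auto simp: move_def Let_def split: if_splits)
      apply (cases ss) apply (auto)
      done
  next
    case False
    then obtain j where j: "i = Suc (Suc j)" using r i_cases by blast
    show ?thesis using assms r unfolding j
      apply (auto simp: move_def Let_def nth_append split: if_splits)
      apply (rule nth_equalityI) apply (auto simp: nth_append nth_list_update nth_Cons split: nat.splits)
      apply (rule nth_equalityI) apply (auto simp: nth_append nth_list_update nth_Cons split: nat.splits)
      done
  qed
qed


fun mapT :: "(nat \<Rightarrow> nat) \<Rightarrow> nat list \<times> nat list list \<times> nat list \<Rightarrow> nat list \<times> nat list list \<times> nat list" where
  "mapT f (inp, ss, oq) = (map f inp, map (map f) ss, map f oq)"

fun extT :: "nat list \<times> nat list list \<times> nat list \<Rightarrow> nat list \<times> nat list list \<times> nat list \<Rightarrow> nat list \<times> nat list list \<times> nat list" where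
  "extT (ei, es, eo) (inp, ss, oq) = (inp @ ei, map (\<lambda>(a, b). a @ b) (zip ss es), eo @ oq)"

lemma move_map:
  assumes "length ss = k"
  shows "move k i (Some (mapT f (inp, ss, oq))) = map_option (mapT f) (move k i (Some (inp, ss, oq)))"
proof (cases "1 \<le> i \<and> i \<le> k + 1")
  case False then show ?thesis by (auto simp: move_def)
next
  case True
  then consider "i = 1" | j where "i = Suc (Suc j)" using i_cases by blast
  then show ?thesis
  proof cases
    case 1 then show ?thesis using assms True
      by (cases inp) (auto simp: move_def Let_def map_update hd_map)
  next
    case 2 then show ?thesis using assms True
      by (auto simp: move_def Let_def map_update hd_map map_tl)
  qed
qed

lemma map2_update[simp]:
  "j < length ss \<Longrightarrow> length es = length ss \<Longrightarrow>
   map (\<lambda>(a, b). a @ b) (zip (ss[j := x]) es) = (map (\<lambda>(a, b). a @ b) (zip ss es))[j := x @ es ! j]"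
  by (rule nth_equalityI) (auto simp: nth_list_update)

lemma move_ext:
  assumes "length ss = k" "length (fst (snd E)) = k" "move k i (Some (inp, ss, oq)) = Some r"
  shows "move k i (Some (extT E (inp, ss, oq))) = Some (extT E r)"
proof -
  obtain ei es eo where E: "E = (ei, es, eo)" by (cases E)
  have r: "1 \<le> i \<and> i \<le> k + 1" using assms by (auto simp: move_def split: if_splits)
  then consider "i = 1" | j where "i = Suc (Suc j)" using i_cases by blast
  then show ?thesis
  proof cases
    case 1 then show ?thesis using assms r unfolding E
      apply (cases inp) apply (auto simp: move_def Let_def split: if_splits)
      apply (subst map2_update) apply auto
      done
  next
    case 2 then show ?thesis using assms r unfolding E
      apply (auto simp: move_def Let_def split: if_splits)
      done
  qed
qed


lemma act_len:
  "length (fst (snd st)) = k \<Longrightarrow> act k w (Some st) = Some r \<Longrightarrow> length (fst (snd r)) = k"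
proof (induction w arbitrary: st)
  case Nil then show ?case by simp
next
  case (Cons i w)
  obtain inp ss oq where st: "st = (inp, ss, oq)" by (cases st)
  from Cons.prems obtain st' where m: "move k i (Some st) = Some st'"
    by (cases "move k i (Some st)") auto
  obtain inp' ss' oq' where st': "st' = (inp', ss', oq')" by (cases st')
  from move_Some[of ss k i inp oq inp' ss' oq'] Cons.prems m st st' have "length ss' = k" by auto
  then show ?case using Cons.IH[of st'] Cons.prems m st' by auto
qed

lemma act_map:
  "length (fst (snd st)) = k \<Longrightarrow> act k w (Some (mapT f st)) = map_option (mapT f) (act k w (Some st))"
proof (induction w arbitrary: st)
  case Nil then show ?case by simp
next
  case (Cons i w)
  obtain inp ss oq where st: "st = (inp, ss, oq)" by (cases st)
  show ?case
  proof (cases "move k i (Some st)")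
    case None
    then show ?thesis using move_map[of ss k i f inp oq] Cons.prems st by simp
  next
    case (Some st')
    obtain inp' ss' oq' where st': "st' = (inp', ss', oq')" by (cases st')
    from move_Some[of ss k i inp oq inp' ss' oq'] Cons.prems Some st st' have "length ss' = k" by auto
    then show ?thesis using Cons.IH[of st'] move_map[of ss k i f inp oq] Cons.prems st st' Some by simp
  qed
qed

lemma act_ext:
  "length (fst (snd st)) = k \<Longrightarrow> length (fst (snd E)) = k \<Longrightarrow> act k w (Some st) = Some r \<Longrightarrow>
   act k w (Some (extT E st)) = Some (extT E r)"
proof (induction w arbitrary: st)
  case Nil then show ?case by simp
next
  case (Cons i w)
  obtain inp ss oq where st: "st = (inp, ss, oq)" by (cases st)
  from Cons.prems obtain st' where m: "move k i (Some st) = Some st'"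
    by (cases "move k i (Some st)") auto
  obtain inp' ss' oq' where st': "st' = (inp', ss', oq')" by (cases st')
  from move_Some[of ss k i inp oq inp' ss' oq'] Cons.prems m st st' have "length ss' = k" by auto
  then show ?case using Cons.IH[of st'] Cons.prems m st' move_ext[of ss k E i inp oq st'] st by auto
qed

definition cnt :: "(nat \<Rightarrow> bool) \<Rightarrow> nat list \<Rightarrow> nat" where "cnt P xs = length (filter P xs)"

definition Wl :: "(nat \<Rightarrow> bool) \<Rightarrow> nat list list \<Rightarrow> nat" where
  "Wl P cs = (\<Sum>j<length cs. j * cnt P (cs ! j))"

lemma Wl_upd:
  assumes "Suc a < length cs" "cs ! a = x # A" "cnt P B = cnt P (cs ! Suc a) + (if P x then 1 else 0)"
  shows "Wl P (cs[a := A, Suc a := B]) = Wl P cs + (if P x then 1 else 0)"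
proof -
  let ?cs = "cs[a := A, Suc a := B]"
  let ?b = "(if P x then 1 else 0) :: nat"
  define f where "f j = j * cnt P (?cs ! j)" for j
  define g where "g j = j * cnt P (cs ! j)" for j
  have S: "{..<length cs} = insert a (insert (Suc a) ({..<length cs} - {a, Suc a}))" using assms(1) by auto
  have eq: "sum f ({..<length cs} - {a, Suc a}) = sum g ({..<length cs} - {a, Suc a})"
    by (rule sum.cong) (auto simp: f_def g_def)
  have ca: "cnt P (cs ! a) = cnt P A + ?b" using assms(2) by (simp add: cnt_def)
  have "sum f {..<length cs} = f a + f (Suc a) + sum f ({..<length cs} - {a, Suc a})"
    by (subst S) auto
  moreover have "sum g {..<length cs} = g a + g (Suc a) + sum g ({..<length cs} - {a, Suc a})"
    by (subst S) auto
  moreover have "f a + f (Suc a) = g a + g (Suc a) + ?b"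
    using assms(1,3) ca by (simp add: f_def g_def nth_list_update algebra_simps)
  ultimately show ?thesis using eq by (simp add: Wl_def f_def g_def)
qed

lemma move_W:
  assumes "length ss = k" "move k i (Some (inp, ss, oq)) = Some st'"
  shows "Wl P (conts st') = Wl P (conts (inp, ss, oq)) + (if P (hd (conts (inp, ss, oq) ! (i - 1))) then 1 else 0)"
proof -
  obtain inp' ss' oq' where st': "st' = (inp', ss', oq')" by (cases st')
  note M = move_Some[OF assms(1) assms(2)[unfolded st']]
  let ?cs = "conts (inp, ss, oq)"
  have i: "Suc (i - 1) = i" using M by auto
  have "Wl P (?cs[i - 1 := tl (?cs ! (i - 1)), Suc (i - 1) := (if i \<le> k then hd (?cs ! (i - 1)) # ?cs ! i
             else ?cs ! i @ [hd (?cs ! (i - 1))])]) = Wl P ?cs + (if P (hd (?cs ! (i - 1))) then 1 else 0)"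
    apply (rule Wl_upd)
    using M assms(1) i by (auto simp: cnt_def)
  then show ?thesis using M i st' by simp
qed

lemma act_W_mono:
  "length (fst (snd st)) = k \<Longrightarrow> act k w (Some st) = Some r \<Longrightarrow> Wl P (conts st) \<le> Wl P (conts r)"
proof (induction w arbitrary: st)
  case Nil then show ?case by simp
next
  case (Cons i w)
  obtain inp ss oq where st: "st = (inp, ss, oq)" by (cases st)
  from Cons.prems obtain st' where m: "move k i (Some st) = Some st'"
    by (cases "move k i (Some st)") auto
  obtain inp' ss' oq' where st': "st' = (inp', ss', oq')" by (cases st')
  from move_Some[of ss k i inp oq inp' ss' oq'] Cons.prems m st st' have "length ss' = k" by auto
  then have "Wl P (conts st') \<le> Wl P (conts r)" using Cons.IH[of st'] Cons.prems m st' by auto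
  moreover have "Wl P (conts st) \<le> Wl P (conts st')" using move_W[of ss k i inp oq st' P] Cons.prems m st by auto
  ultimately show ?case by simp
qed

lemma set_concat_upd: "set (concat (xs[i := y])) \<subseteq> set (concat xs) \<union> set y"
  by (induction xs arbitrary: i) (auto split: nat.splits)

lemma move_labels:
  assumes "length ss = k" "move k i (Some (inp, ss, oq)) = Some st'"
  shows "set (concat (conts st')) \<subseteq> set (concat (conts (inp, ss, oq)))"
proof -
  obtain inp' ss' oq' where st': "st' = (inp', ss', oq')" by (cases st')
  note M = move_Some[OF assms(1) assms(2)[unfolded st']]
  let ?cs = "conts (inp, ss, oq)"
  have lc: "length ?cs = k + 2" using assms(1) by simp
  have l: "i < length ?cs" "i - 1 < length ?cs" using M lc by (auto simp del: conts.simps)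
  have m1: "set (?cs ! (i - 1)) \<subseteq> set (concat ?cs)" "set (?cs ! i) \<subseteq> set (concat ?cs)"
    using l by (auto simp del: conts.simps intro!: bexI[OF _ nth_mem])
  have ne: "?cs ! (i - 1) \<noteq> []" using M by blast
  have a: "set (tl (?cs ! (i - 1))) \<subseteq> set (concat ?cs)" "hd (?cs ! (i - 1)) \<in> set (concat ?cs)"
  proof -
    have "set (tl (?cs ! (i - 1))) \<subseteq> set (?cs ! (i - 1))" by (cases "?cs ! (i - 1)") auto
    then show "set (tl (?cs ! (i - 1))) \<subseteq> set (concat ?cs)" using m1(1) by (rule order_trans)
    show "hd (?cs ! (i - 1)) \<in> set (concat ?cs)" using m1(1) list.set_sel(1)[OF ne] by (rule subsetD)
  qed
  have "set (concat (conts st')) \<subseteq> set (concat ?cs) \<union> set (tl (?cs ! (i - 1))) \<union>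
      set (if i \<le> k then hd (?cs ! (i - 1)) # ?cs ! i else ?cs ! i @ [hd (?cs ! (i - 1))])"
  proof -
    define T where "T = (if i \<le> k then hd (?cs ! (i - 1)) # ?cs ! i else ?cs ! i @ [hd (?cs ! (i - 1))])"
    have e: "conts st' = ?cs[i - 1 := tl (?cs ! (i - 1)), i := T]" using M st' unfolding T_def by blast
    have "set (concat (?cs[i - 1 := tl (?cs ! (i - 1)), i := T])) \<subseteq>
        set (concat (?cs[i - 1 := tl (?cs ! (i - 1))])) \<union> set T" by (rule set_concat_upd)
    also have "\<dots> \<subseteq> set (concat ?cs) \<union> set (tl (?cs ! (i - 1))) \<union> set T"
      using set_concat_upd[of ?cs "i - 1" "tl (?cs ! (i - 1))"] by blast
    finally show ?thesis unfolding e T_def .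
  qed
  then show ?thesis using a m1 by (auto split: if_splits simp del: conts.simps)
qed


lemma act_labels:
  "length (fst (snd st)) = k \<Longrightarrow> act k w (Some st) = Some r \<Longrightarrow>
   set (concat (conts r)) \<subseteq> set (concat (conts st))"
proof (induction w arbitrary: st)
  case Nil then show ?case by simp
next
  case (Cons i w)
  obtain inp ss oq where st: "st = (inp, ss, oq)" by (cases st)
  from Cons.prems obtain st' where m: "move k i (Some st) = Some st'"
    by (cases "move k i (Some st)") auto
  obtain inp' ss' oq' where st': "st' = (inp', ss', oq')" by (cases st')
  from move_Some[of ss k i inp oq inp' ss' oq'] Cons.prems m st st' have "length ss' = k" by auto
  then have "set (concat (conts r)) \<subseteq> set (concat (conts st'))" using Cons.IH[of st'] Cons.prems m st' by auto
  moreover have "set (concat (conts st')) \<subseteq> set (concat (conts st))"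
    using move_labels[of ss k i inp oq st'] Cons.prems m st by auto
  ultimately show ?case by blast
qed

lemma conts_ext_nth:
  assumes "length es = length ss" "j \<le> length ss"
  shows "conts (extT (ei, es, eo) (inp, ss, oq)) ! j = conts (inp, ss, oq) ! j @ conts (ei, es, eo) ! j"
  using assms by (cases j) (auto simp: nth_append)

lemma Wl_ext:
  assumes "length es = length ss"
  shows "Wl P (conts (extT (ei, es, eo) (inp, ss, oq))) = Wl P (conts (inp, ss, oq)) + Wl P (conts (ei, es, eo))"
proof -
  have c: "cnt P (conts (extT (ei, es, eo) (inp, ss, oq)) ! j) = cnt P (conts (inp, ss, oq) ! j) + cnt P (conts (ei, es, eo) ! j)"
    if "j < length ss + 2" for j
  proof (cases "j \<le> length ss")
    case True then show ?thesis using conts_ext_nth[OF assms True] by (simp add: cnt_def)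
  next
    case False then have "j = length ss + 1" using that by simp
    then show ?thesis using assms by (simp add: cnt_def nth_append)
  qed
  have "Wl P (conts (extT (ei, es, eo) (inp, ss, oq))) = (\<Sum>j<length ss + 2. j * cnt P (conts (extT (ei, es, eo) (inp, ss, oq)) ! j))"
    using assms by (simp add: Wl_def)
  also have "\<dots> = (\<Sum>j<length ss + 2. j * cnt P (conts (inp, ss, oq) ! j) + j * cnt P (conts (ei, es, eo) ! j))"
    apply (rule sum.cong, simp)
    subgoal for j using c[of j] by (simp only: lessThan_iff algebra_simps)
    done
  also have "\<dots> = Wl P (conts (inp, ss, oq)) + Wl P (conts (ei, es, eo))"
    using assms by (simp add: Wl_def sum.distrib)
  finally show ?thesis .
qed

lemma Wl_zero: "(\<forall>x\<in>set (concat cs). \<not> P x) \<Longrightarrow> Wl P cs = 0"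
  unfolding Wl_def cnt_def
  by (rule sum.neutral) (auto simp: filter_empty_conv)

lemma W_strict:
  assumes "length ss = k" "length es = k" "act k v (Some (inp, ss, oq)) = None"
    "act k v (Some (extT (ei, es, eo) (inp, ss, oq))) = Some y"
    "\<forall>x \<in> set ei \<union> set (concat es). P x"
  shows "Wl P (conts (extT (ei, es, eo) (inp, ss, oq))) < Wl P (conts y)"
  using assms
proof (induction v arbitrary: inp ss oq)
  case Nil then show ?case by simp
next
  case (Cons i v)
  let ?E = "(ei, es, eo)"
  let ?x = "extT ?E (inp, ss, oq)"
  have lx: "length (fst (snd ?x)) = k" using Cons.prems by simp
  from Cons.prems obtain z where mz: "move k i (Some ?x) = Some z"
    by (cases "move k i (Some ?x)") auto
  obtain a b c where z: "z = (a, b, c)" by (cases z)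
  note Mz = move_Some[of "fst (snd ?x)" k i "inp @ ei" "eo @ oq" a b c, simplified] 
  have lz: "length b = k" and ir: "1 \<le> i" "i \<le> k + 1" using Mz mz z lx Cons.prems by auto
  have ay: "act k v (Some z) = Some y" using Cons.prems mz by simp
  show ?case
  proof (cases "move k i (Some (inp, ss, oq))")
    case None
    then have e: "conts (inp, ss, oq) ! (i - 1) = []" using move_None_iff[of ss k i inp oq] Cons.prems ir by simp
    have "conts ?x ! (i - 1) = conts ?E ! (i - 1)"
      using conts_ext_nth[of es ss "i - 1" ei eo inp oq] e Cons.prems ir by simp
    moreover have "conts ?x ! (i - 1) \<noteq> []" using Mz mz z lx by auto
    ultimately have "P (hd (conts ?x ! (i - 1)))"
    proof -
      have "set (conts ?E ! (i - 1)) \<subseteq> set ei \<union> set (concat es)"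
      proof (cases "i - 1")
        case 0 then show ?thesis by simp
      next
        case (Suc j) then have "j < length es" using ir Cons.prems by simp
        then show ?thesis using Suc by (auto simp: nth_append)
      qed
      moreover assume "conts ?x ! (i - 1) = conts ?E ! (i - 1)" "conts ?x ! (i - 1) \<noteq> []"
      ultimately show ?thesis using Cons.prems(5) list.set_sel(1) by (metis UnE subsetD)
    qed
    then have "Wl P (conts z) = Wl P (conts ?x) + 1"
      using move_W[of "fst (snd ?x)" k i "inp @ ei" "eo @ oq" z P] lx mz by simp
    moreover have "Wl P (conts z) \<le> Wl P (conts y)" using act_W_mono[of z k v y P] ay lz z by simp
    ultimately show ?thesis by simp
  next
    case (Some x')
    obtain a' b' c' where x': "x' = (a', b', c')" by (cases x')
    have lb: "length b' = k" using move_Some[of ss k i inp oq a' b' c'] Some x' Cons.prems by simp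
    have "move k i (Some ?x) = Some (extT ?E x')"
      using move_ext[of ss k ?E i inp oq x'] Some Cons.prems by simp
    then have zz: "z = extT ?E x'" using mz by simp
    have IH: "Wl P (conts (extT ?E x')) < Wl P (conts y)"
      using Cons.IH[of b' a' c'] lb Cons.prems Some x' zz ay by simp
    have "Wl P (conts ?x) \<le> Wl P (conts z)"
      using move_W[of "fst (snd ?x)" k i "inp @ ei" "eo @ oq" z P] lx mz by simp
    then show ?thesis using IH zz by simp
  qed
qed


lemma fresh_list: "finite (A :: nat set) \<Longrightarrow> \<exists>xs. length xs = n \<and> distinct xs \<and> set xs \<inter> A = {}"
proof -
  assume f: "finite A"
  define M where "M = Suc (Max (insert 0 A))"
  have "\<forall>a\<in>A. a < M" using f unfolding M_def by (simp add: le_imp_less_Suc)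
  then show ?thesis by (intro exI[of _ "[M..<M+n]"]) auto
qed

lemma fresh_lists: "finite (A :: nat set) \<Longrightarrow> \<exists>xss. map length xss = ns \<and> distinct (concat xss) \<and> set (concat xss) \<inter> A = {}"
proof (induction ns arbitrary: A)
  case Nil then show ?case by simp
next
  case (Cons n ns)
  obtain xs where xs: "length xs = n" "distinct xs" "set xs \<inter> A = {}" using fresh_list[OF Cons.prems] by blast
  obtain xss where xss: "map length xss = ns" "distinct (concat xss)" "set (concat xss) \<inter> (A \<union> set xs) = {}"
    using Cons.IH[of "A \<union> set xs"] Cons.prems by blast
  show ?case using xs xss by (intro exI[of _ "xs # xss"]) auto
qed

lemma fresh_triple:
  "finite (A :: nat set) \<Longrightarrow> \<exists>ei es eo. length ei = a \<and> map length es = ns \<and> length eo = c \<and>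
     distinct (concat (conts (ei, es, eo))) \<and> set (concat (conts (ei, es, eo))) \<inter> A = {}"
proof -
  assume f: "finite A"
  obtain ei where 1: "length ei = a" "distinct ei" "set ei \<inter> A = {}" using fresh_list[OF f] by blast
  obtain es where 2: "map length es = ns" "distinct (concat es)" "set (concat es) \<inter> (A \<union> set ei) = {}"
    using fresh_lists[of "A \<union> set ei"] f by blast
  obtain eo where 3: "length eo = c" "distinct eo" "set eo \<inter> (A \<union> set ei \<union> set (concat es)) = {}"
    using fresh_list[of "A \<union> set ei \<union> set (concat es)"] f by blast
  show ?thesis using 1 2 3 by (intro exI[of _ ei] exI[of _ es] exI[of _ eo]) auto
qed

lemma relabel_list: "distinct xs \<Longrightarrow> length xs = length ys \<Longrightarrow> \<exists>g. map g xs = (ys :: nat list)"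
proof (induction xs arbitrary: ys)
  case Nil then show ?case by simp
next
  case (Cons x xs)
  then obtain y ys' where ys: "ys = y # ys'" by (cases ys) auto
  obtain g where g: "map g xs = ys'" using Cons ys by auto
  have "map (g(x := y)) xs = ys'" using g Cons.prems by (simp add: map_fun_upd)
  then have "map (g(x := y)) (x # xs) = ys" using ys by simp
  then show ?case by blast
qed

lemma concat_split: "map length xss = map length yss \<Longrightarrow> concat (map (map g) xss) = concat yss \<Longrightarrow> map (map g) xss = yss"
proof (induction xss arbitrary: yss)
  case Nil then show ?case by simp
next
  case (Cons xs xss)
  then obtain ys yss' where y: "yss = ys # yss'" by (cases yss) auto
  have "map g xs @ concat (map (map g) xss) = ys @ concat yss'" using Cons.prems y by simp
  moreover have "length (map g xs) = length ys" using Cons.prems y by simp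
  ultimately have "map g xs = ys" "concat (map (map g) xss) = concat yss'" by auto
  then show ?case using Cons y by simp
qed

lemma relabel_lists: "distinct (concat xss) \<Longrightarrow> map length xss = map length yss \<Longrightarrow> \<exists>g. map (map g) xss = (yss :: nat list list)"
proof -
  assume d: "distinct (concat xss)" and l: "map length xss = map length yss"
  have "length (concat xss) = length (concat yss)" using l by (simp add: length_concat)
  then obtain g where "map g (concat xss) = concat yss" using relabel_list[OF d] by blast
  then show ?thesis using concat_split[OF l] by (auto simp: map_concat)
qed

lemma conts_map: "conts (mapT g st) = map (map g) (conts st)"
  by (cases st) simp

lemma conts_inj: "conts a = conts b \<Longrightarrow> a = b"
  by (cases a; cases b) auto

lemma mset_map2: "length ss = length es \<Longrightarrow> mset (concat (map (\<lambda>(a, b). a @ b) (zip ss es))) = mset (concat ss) + mset (concat es)"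
  by (induction ss es rule: list_induct2) auto

lemma mset_ext: "length es = length ss \<Longrightarrow>
   mset (concat (conts (extT (ei, es, eo) (inp, ss, oq)))) = mset (concat (conts (inp, ss, oq))) + mset (concat (conts (ei, es, eo)))"
  by (simp add: mset_map2)

lemma ext_inj:
  assumes "extT (ei, es, eo) (a1, b1, c1) = extT (ei, es, eo) (a2, b2, c2)" "length b1 = length es" "length b2 = length es"
  shows "(a1, b1, c1) = (a2, b2, c2)"
proof -
  have "b1 = b2"
  proof (rule nth_equalityI)
    show "length b1 = length b2" using assms by simp
    fix j assume "j < length b1"
    then have "map (\<lambda>(a, b). a @ b) (zip b1 es) ! j = map (\<lambda>(a, b). a @ b) (zip b2 es) ! j" using assms by simp
    then show "b1 ! j = b2 ! j" using \<open>j < length b1\<close> assms by simp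
  qed
  then show ?thesis using assms by simp
qed


lemma upd_len: "j < length cs \<Longrightarrow> n \<le> length (cs ! j) - 1 \<Longrightarrow> (j = i \<Longrightarrow> length (cs ! j) \<le> length T) \<Longrightarrow>
   n \<le> length (cs[a := tl (cs ! a), i := T] ! j)"
  by (cases "j = i"; cases "j = a") (auto simp: nth_list_update)

lemma legal:
  "length ss = k \<Longrightarrow> set w \<subseteq> {1..k+1} \<Longrightarrow> (\<forall>j\<le>k. length w \<le> length (conts (inp, ss, oq) ! j)) \<Longrightarrow>
   act k w (Some (inp, ss, oq)) \<noteq> None"
proof (induction w arbitrary: inp ss oq)
  case Nil then show ?case by simp
next
  case (Cons i w)
  let ?cs = "conts (inp, ss, oq)"
  have ir: "1 \<le> i" "i \<le> k + 1" using Cons.prems by auto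
  have "Suc (length w) \<le> length (?cs ! (i - 1))" using Cons.prems(3) ir by fastforce
  then have ne: "?cs ! (i - 1) \<noteq> []" by (metis Suc_le_length_iff list.distinct(1))
  then obtain a b c where m: "move k i (Some (inp, ss, oq)) = Some (a, b, c)"
    using move_None_iff[of ss k i inp oq] Cons.prems ir by (cases "move k i (Some (inp, ss, oq))") auto
  note M = move_Some[OF Cons.prems(1) m]
  have lc: "length ?cs = k + 2" using Cons.prems by simp
  have "\<forall>j\<le>k. length w \<le> length (conts (a, b, c) ! j)"
  proof (intro allI impI)
    fix j assume j: "j \<le> k"
    have jl: "j < length ?cs" using lc j by simp
    have "length w \<le> length (?cs ! j) - 1" using Cons.prems(3) j by fastforce
    have e: "conts (a, b, c) = ?cs[i - 1 := tl (?cs ! (i - 1)),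
       i := (if i \<le> k then hd (?cs ! (i - 1)) # ?cs ! i else ?cs ! i @ [hd (?cs ! (i - 1))])]"
      using M by blast
    show "length w \<le> length (conts (a, b, c) ! j)" unfolding e
      by (rule upd_len[OF jl]) (use \<open>length w \<le> length (?cs ! j) - 1\<close> j in \<open>auto simp del: conts.simps\<close>)
  qed
  then show ?case using Cons.IH[of b a c] M Cons.prems m by simp
qed


lemma no_mixed:
  assumes "length ss = k" "length es = k"
    "set (concat (conts (ei, es, eo))) \<inter> set (concat (conts (inp, ss, oq))) = {}"
    "act k u (Some (inp, ss, oq)) = Some r" "act k v (Some (inp, ss, oq)) = None"
    "act k u (Some (extT (ei, es, eo) (inp, ss, oq))) = act k v (Some (extT (ei, es, eo) (inp, ss, oq)))"
  shows False
proof -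
  let ?E = "(ei, es, eo)"
  let ?P = "\<lambda>l. l \<in> set (concat (conts ?E))"
  obtain a1 a2 a3 where r: "r = (a1, a2, a3)" by (cases r)
  have la: "length a2 = k" using act_len[of "(inp, ss, oq)" k u r] assms r by simp
  have ue: "act k u (Some (extT ?E (inp, ss, oq))) = Some (extT ?E r)"
    using act_ext[of "(inp, ss, oq)" k ?E u r] assms by simp
  have lt: "Wl ?P (conts (extT ?E (inp, ss, oq))) < Wl ?P (conts (extT ?E r))"
    by (rule W_strict[of ss k es v inp oq]) (use assms ue in auto)
  have z1: "Wl ?P (conts (inp, ss, oq)) = 0" using assms(3) by (intro Wl_zero) blast
  have "set (concat (conts r)) \<subseteq> set (concat (conts (inp, ss, oq)))"
    using act_labels[of "(inp, ss, oq)" k u r] assms by simp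
  then have z2: "Wl ?P (conts r) = 0" using assms(3) by (intro Wl_zero) blast
  show False using lt z1 z2 Wl_ext[of es ss ?P ei eo inp oq] Wl_ext[of es a2 ?P ei eo a1 a3] assms la r by simp
qed

lemma states_distinct: "Some (inp, ss, oq) \<in> states k \<longleftrightarrow> length ss = k \<and> distinct (concat (conts (inp, ss, oq)))"
  by (simp add: states_def)

theorem proposition4:
  fixes k :: nat and u v :: "nat list"
  assumes "u \<in> words k" and "v \<in> words k"
  shows "(\<exists>s \<in> states k. act k u s = act k v s \<and> act k u s \<noteq> None) \<longleftrightarrow> equiv_words k u v"
proof
  assume "equiv_words k u v"
  obtain ei es eo where E: "length ei = length u" "map length es = replicate k (length u)" "length eo = 0"
    "distinct (concat (conts (ei, es, eo)))"
    using fresh_triple[of "{}" "length u" "replicate k (length u)" 0] by auto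
  have les: "length es = k" using E(2) by (metis length_map length_replicate)
  have s: "Some (ei, es, eo) \<in> states k" using E les by (simp add: states_def)
  have "\<forall>j\<le>k. length u \<le> length (conts (ei, es, eo) ! j)"
  proof (intro allI impI)
    fix j assume j: "j \<le> k"
    show "length u \<le> length (conts (ei, es, eo) ! j)"
    proof (cases j)
      case 0 then show ?thesis using E by simp
    next
      case (Suc j')
      then have "j' < length es" using j les by simp
      then have "length (es ! j') = length u" using E(2) by (metis nth_map nth_replicate les)
      then show ?thesis using Suc \<open>j' < length es\<close> by (simp add: nth_append)
    qed
  qed
  then have "act k u (Some (ei, es, eo)) \<noteq> None"
    using legal[of es k u ei eo] les assms(1) by (simp add: words_def)
  then show "\<exists>s \<in> states k. act k u s = act k v s \<and> act k u s \<noteq> None"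
    using s \<open>equiv_words k u v\<close> unfolding equiv_words_def by blast
next
  assume "\<exists>s \<in> states k. act k u s = act k v s \<and> act k u s \<noteq> None"
  then obtain si sss so where S: "Some (si, sss, so) \<in> states k" "act k u (Some (si, sss, so)) = act k v (Some (si, sss, so))"
    "act k u (Some (si, sss, so)) \<noteq> None"
    by (metis act_None option.exhaust prod_cases3)
  then obtain ru where ru: "act k u (Some (si, sss, so)) = Some ru" "act k v (Some (si, sss, so)) = Some ru" by auto
  have ls: "length sss = k" and ds: "distinct (concat (conts (si, sss, so)))" using S(1) by (auto simp: states_def)
  show "equiv_words k u v" unfolding equiv_words_def
  proof
    fix t assume t: "t \<in> states k"
    show "act k u t = act k v t"
    proof (cases t)
      case None then show ?thesis by simp
    next
      case (Some tt)
      then obtain ti tss to where tt: "t = Some (ti, tss, to)" by (cases tt) auto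
      have lt: "length tss = k" and dt: "distinct (concat (conts (ti, tss, to)))" using t tt by (auto simp: states_def)
      define Li where "Li = max (length si) (length ti)"
      define Lo where "Lo = max (length so) (length to)"
      define Ls where "Ls j = max (length (sss ! j)) (length (tss ! j))" for j
      obtain ei es eo where Es: "length ei = Li - length si" "map length es = map (\<lambda>j. Ls j - length (sss ! j)) [0..<k]"
        "length eo = Lo - length so" "distinct (concat (conts (ei, es, eo)))"
        "set (concat (conts (ei, es, eo))) \<inter> set (concat (conts (si, sss, so))) = {}"
        using fresh_triple[of "set (concat (conts (si, sss, so)))"] by blast
      obtain fi fs fo where Ft: "length fi = Li - length ti" "map length fs = map (\<lambda>j. Ls j - length (tss ! j)) [0..<k]"
        "length fo = Lo - length to" "distinct (concat (conts (fi, fs, fo)))"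
        "set (concat (conts (fi, fs, fo))) \<inter> set (concat (conts (ti, tss, to))) = {}"
        using fresh_triple[of "set (concat (conts (ti, tss, to)))"] by blast
      have les: "length es = k" using Es(2) by (metis length_map length_upt diff_zero)
      have lfs: "length fs = k" using Ft(2) by (metis length_map length_upt diff_zero)
      let ?s' = "extT (ei, es, eo) (si, sss, so)"
      let ?t' = "extT (fi, fs, fo) (ti, tss, to)"
      have d0: "distinct (concat (conts (si, sss, so)) @ concat (conts (ei, es, eo)))"
        unfolding distinct_append using ds Es(4,5) by blast
      have m0: "mset (concat (conts ?s')) = mset (concat (conts (si, sss, so)) @ concat (conts (ei, es, eo)))"
        using mset_ext[of es sss ei eo si so] les ls by (simp only: mset_append)
      have ds': "distinct (concat (conts ?s'))"
        using mset_eq_imp_distinct_iff[OF m0] d0 by simp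
      have m1: "map length (map (\<lambda>(a, b). a @ b) (zip sss es)) = map Ls [0..<k]"
      proof (rule nth_equalityI)
        show "length (map length (map (\<lambda>(a, b). a @ b) (zip sss es))) = length (map Ls [0..<k])"
          using les ls by simp
        fix j assume "j < length (map length (map (\<lambda>(a, b). a @ b) (zip sss es)))"
        then have j: "j < k" using les ls by simp
        have "map length es ! j = map (\<lambda>j. Ls j - length (sss ! j)) [0..<k] ! j" using Es(2) by simp
        then have "length (es ! j) = Ls j - length (sss ! j)" using j les by simp
        then show "map length (map (\<lambda>(a, b). a @ b) (zip sss es)) ! j = map Ls [0..<k] ! j"
          using j les ls by (simp add: Ls_def)
      qed
      have m2: "map length (map (\<lambda>(a, b). a @ b) (zip tss fs)) = map Ls [0..<k]"
      proof (rule nth_equalityI)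
        show "length (map length (map (\<lambda>(a, b). a @ b) (zip tss fs))) = length (map Ls [0..<k])"
          using lfs lt by simp
        fix j assume "j < length (map length (map (\<lambda>(a, b). a @ b) (zip tss fs)))"
        then have j: "j < k" using lfs lt by simp
        have "map length fs ! j = map (\<lambda>j. Ls j - length (tss ! j)) [0..<k] ! j" using Ft(2) by simp
        then have "length (fs ! j) = Ls j - length (tss ! j)" using j lfs by simp
        then show "map length (map (\<lambda>(a, b). a @ b) (zip tss fs)) ! j = map Ls [0..<k] ! j"
          using j lfs lt by (simp add: Ls_def)
      qed
      have shape: "map length (conts ?s') = map length (conts ?t')"
        using m1 m2 Es(1,3) Ft(1,3) by (simp add: Li_def Lo_def)
      obtain g where g: "map (map g) (conts ?s') = conts ?t'" using relabel_lists[OF ds' shape] by blast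
      have tg: "?t' = mapT g ?s'" using g by (intro conts_inj) (simp only: conts_map)
      have ls': "length (fst (snd ?s')) = k" using les ls by simp
      have su: "act k u (Some ?s') = Some (extT (ei, es, eo) ru)" "act k v (Some ?s') = Some (extT (ei, es, eo) ru)"
        using act_ext[of "(si, sss, so)" k "(ei, es, eo)" _ ru] ls les ru by auto
      have tuv: "act k u (Some ?t') = act k v (Some ?t')"
        unfolding tg using act_map[OF ls', of u g] act_map[OF ls', of v g] su by simp
      show ?thesis
      proof (cases "act k u (Some (ti, tss, to))")
        case None
        show ?thesis
        proof (cases "act k v (Some (ti, tss, to))")
          case None2: None then show ?thesis using None tt by simp
        next
          case (Some b)
          have False by (rule no_mixed[of tss k fs fi fo ti to v b u]) (use lt lfs Ft(5) Some None tuv in \<open>auto simp: Int_commute\<close>)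
          then show ?thesis ..
        qed
      next
        case (Some a)
        show ?thesis
        proof (cases "act k v (Some (ti, tss, to))")
          case None
          have False by (rule no_mixed[of tss k fs fi fo ti to u a v]) (use lt lfs Ft(5) Some None tuv in \<open>auto simp: Int_commute\<close>)
          then show ?thesis ..
        next
          case Some2: (Some b)
          have "act k u (Some ?t') = Some (extT (fi, fs, fo) a)" "act k v (Some ?t') = Some (extT (fi, fs, fo) b)"
            using act_ext[of "(ti, tss, to)" k "(fi, fs, fo)" _ a] act_ext[of "(ti, tss, to)" k "(fi, fs, fo)" _ b]
              lt lfs Some Some2 by auto
          then have eq: "extT (fi, fs, fo) a = extT (fi, fs, fo) b" using tuv by simp
          have la: "length (fst (snd a)) = k" using act_len[of "(ti, tss, to)" k u a] lt Some by simp
          have lb: "length (fst (snd b)) = k" using act_len[of "(ti, tss, to)" k v b] lt Some2 by simp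
          have "a = b" using ext_inj[of fi fs fo "fst a" "fst (snd a)" "snd (snd a)" "fst b" "fst (snd b)" "snd (snd b)"]
            eq la lb lfs by simp
          then show ?thesis using Some Some2 tt by simp
        qed
      qed
    qed
  qed
qed

end
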